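(* Let $f:F\to F'$ be a morphism of hyperfields. Let $F_1,F_2$ be topological hyperfields whose underlying hyperfield is $F$, such that for each $a\in F'$ the identity map $F_1\to F_2$ restricts to a homeomorphism $f^{-1}(a)\to f^{-1}(a)$, each preimage carrying its subspace topology. Let $*\in\{s,w\}$ and $M\in\operatorname{Gr}^*(r,F'^n)$. Then the identity map $\operatorname{Real}^*_{F_1}(M)\to\operatorname{Real}^*_{F_2}(M)$ is a homeomorphism.
   Context: Hyperfields. A hyperfield $(F,\odot,\boxplus,1,0)$ has the following data and axioms. - $\odot$ is a commutative multiplication and $\boxplus$ is a hyperaddition assigning to each $x,y$ a nonempty subset $x\boxplus y\subseteq F$ (extended to subsets by unions). - $\boxplus$ is commutative and associative, and $x\boxplus 0=\{x\}$. - Each $x$ has a unique $-x$ with $0\in x\boxplus(-x)$, and $x\in y\boxplus z \iff z\in x\boxplus(-y)$. - $(F\setminus\{0\},\odot,1)$ is an abelian group $F^\times$, $0\odot x=0$, and $x\odot(y\boxplus z)=(x\odot y)\boxplus(x\odot z)$. A homomorphism (morphism) $h$ satisfies $h(0)=0$, $h(1)=1$, $h(xy)=h(x)h(y)$ and $h(x\boxplus y)\subseteq h(x)\boxplus h(y)$. A topological hyperfield is a hyperfield with a topology in which $F\setminus\{0\}$ is open, multiplication is continuous, and inversion on $F^\times$ is continuous. Grassmannians. A strong Grassmann–Plücker (GP) function of rank $r$ on $E=\{1,\dots,n\}$ is a function $\varphi:E^r\to F$ with the following properties. - $\varphi$ is not identically $0$. - $\varphi$ is alternating. - For all $(i_1,\dots,i_{r+1})\in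 E^{r+1}$ and $(j_1,\dots,j_{r-1})\in E^{r-1}$: $$0\in\boxplus_{k=1}^{r+1}(-1)^k\varphi(i_1,\dots,\widehat{i_k},\dots,i_{r+1})\odot\varphi(i_k,j_1,\dots,j_{r-1}).$$ A weak GP function is a function $\varphi:E^r\to F$ with the following properties. - $\varphi$ is nonzero and alternating. - Its support $\{\{i_1,\dots,i_r\}:\varphi(i_1,\dots,i_r)\ne0\}$ is the set of bases of a matroid. - The relation holds whenever $|\{i\}\setminus\{j\}|=3$. $\operatorname{Gr}^s(r,F^n)$ and $\operatorname{Gr}^w(r,F^n)$ are the sets of classes of strong, resp. weak, GP functions modulo $\varphi\sim\alpha\varphi$, $\alpha\in F^\times$. For topological $F$ they have the subspace topology of $(F^{E^r}\setminus\{0\})/F^\times$, which carries the product and quotient topologies. Realization spaces. A morphism $f$ induces $\operatorname{Gr}^*(f):[\varphi]\mapsto[f\circ\varphi]$. For $M\in\operatorname{Gr}^*(r,F'^n)$, the realization space $\operatorname{Real}^*_F(M)$ is the preimage $\operatorname{Gr}^*(f)^{-1}(M)\subseteq\operatorname{Gr}^*(r,F^n)$ with the subspace topology. The notation $\operatorname{Real}^*_{F_i}(M)$ indicates which topology on $F$ is used. *)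

theory Defs
  imports "HOL-Analysis.Analysis" "HOL-Combinatorics.Permutations"
begin

text \<open>A hyperfield structure on the whole type 'a (the underlying set is UNIV).\<close>
record 'a hyperfield =
  hmul  :: "'a \<Rightarrow> 'a \<Rightarrow> 'a"
  hadd  :: "'a \<Rightarrow> 'a \<Rightarrow> 'a set"
  hone  :: 'a
  hzero :: 'a

definition set_hadd :: "('a, 'b) hyperfield_scheme \<Rightarrow> 'a set \<Rightarrow> 'a set \<Rightarrow> 'a set" where
  "set_hadd F A B = (\<Union>a\<in>A. \<Union>b\<in>B. hadd F a b)"

definition hneg :: "('a, 'b) hyperfield_scheme \<Rightarrow> 'a \<Rightarrow> 'a" where
  "hneg F x = (THE y. hzero F \<in> hadd F x y)"

definition hinv :: "('a, 'b) hyperfield_scheme \<Rightarrow> 'a \<Rightarrow> 'a" where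
  "hinv F x = (THE y. hmul F x y = hone F)"

definition is_hyperfield :: "('a, 'b) hyperfield_scheme \<Rightarrow> bool" where
  "is_hyperfield F \<longleftrightarrow>
     (\<forall>x y. hmul F x y = hmul F y x) \<and>
     (\<forall>x y z. hmul F (hmul F x y) z = hmul F x (hmul F y z)) \<and>
     (\<forall>x y. hadd F x y \<noteq> {}) \<and>
     (\<forall>x y. hadd F x y = hadd F y x) \<and>
     (\<forall>x y z. set_hadd F (hadd F x y) {z} = set_hadd F {x} (hadd F y z)) \<and>
     (\<forall>x. hadd F x (hzero F) = {x}) \<and>
     (\<forall>x. \<exists>!y. hzero F \<in> hadd F x y) \<and>
     (\<forall>x y z. x \<in> hadd F y z \<longleftrightarrow> z \<in> hadd F x (hneg F y)) \<and>
     hone F \<noteq> hzero F \<and>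
     (\<forall>x. hmul F (hone F) x = x) \<and>
     (\<forall>x y. x \<noteq> hzero F \<longrightarrow> y \<noteq> hzero F \<longrightarrow> hmul F x y \<noteq> hzero F) \<and>
     (\<forall>x. x \<noteq> hzero F \<longrightarrow> (\<exists>y. hmul F x y = hone F)) \<and>
     (\<forall>x. hmul F (hzero F) x = hzero F) \<and>
     (\<forall>x y z. hmul F x ` hadd F y z = hadd F (hmul F x y) (hmul F x z))"

definition hf_morphism ::
  "('a, 'c) hyperfield_scheme \<Rightarrow> ('b, 'd) hyperfield_scheme \<Rightarrow> ('a \<Rightarrow> 'b) \<Rightarrow> bool" where
  "hf_morphism F F' h \<longleftrightarrow>
     h (hzero F) = hzero F' \<and> h (hone F) = hone F' \<and>
     (\<forall>x y. h (hmul F x y) = hmul F' (h x) (h y)) \<and>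
     (\<forall>x y. h ` hadd F x y \<subseteq> hadd F' (h x) (h y))"

definition is_top_hyperfield :: "('a, 'b) hyperfield_scheme \<Rightarrow> 'a topology \<Rightarrow> bool" where
  "is_top_hyperfield F T \<longleftrightarrow>
     is_hyperfield F \<and> topspace T = UNIV \<and>
     openin T (- {hzero F}) \<and>
     continuous_map (prod_topology T T) T (\<lambda>(x, y). hmul F x y) \<and>
     continuous_map (subtopology T (- {hzero F})) (subtopology T (- {hzero F})) (hinv F)"

text \<open>E^r with E = {1..n}: lists of length r with entries in {1..n}.\<close>
definition Er :: "nat \<Rightarrow> nat \<Rightarrow> nat list set" where
  "Er n r = {xs. length xs = r \<and> set xs \<subseteq> {1..n}}"

fun hsum :: "('a, 'b) hyperfield_scheme \<Rightarrow> 'a list \<Rightarrow> 'a set" where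
  "hsum F [] = {hzero F}"
| "hsum F (a # as) = set_hadd F {a} (hsum F as)"

definition sgnpow :: "('a, 'b) hyperfield_scheme \<Rightarrow> nat \<Rightarrow> 'a" where
  "sgnpow F k = (if even k then hone F else hneg F (hone F))"

definition gp_nonzero :: "('a, 'b) hyperfield_scheme \<Rightarrow> nat \<Rightarrow> nat \<Rightarrow> (nat list \<Rightarrow> 'a) \<Rightarrow> bool" where
  "gp_nonzero F n r \<phi> \<longleftrightarrow> (\<exists>xs\<in>Er n r. \<phi> xs \<noteq> hzero F)"

definition gp_alternating :: "('a, 'b) hyperfield_scheme \<Rightarrow> nat \<Rightarrow> nat \<Rightarrow> (nat list \<Rightarrow> 'a) \<Rightarrow> bool" where
  "gp_alternating F n r \<phi> \<longleftrightarrow>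
     (\<forall>xs\<in>Er n r.
        (\<forall>\<sigma>. \<sigma> permutes {..<r} \<longrightarrow>
              \<phi> (map (\<lambda>i. xs ! \<sigma> i) [0..<r]) = hmul F (sgnpow F (if sign \<sigma> = 1 then 0 else 1)) (\<phi> xs)) \<and>
        (\<not> distinct xs \<longrightarrow> \<phi> xs = hzero F))"

text \<open>The Grassmann--Pluecker relation for (i_1..i_{r+1}) = I and (j_1..j_{r-1}) = J
  (k below is 0-based, so the sign is (-1)^(k+1)).\<close>
definition gp_rel ::
  "('a, 'b) hyperfield_scheme \<Rightarrow> nat \<Rightarrow> (nat list \<Rightarrow> 'a) \<Rightarrow> nat list \<Rightarrow> nat list \<Rightarrow> bool" where
  "gp_rel F r \<phi> I J \<longleftrightarrow>
     hzero F \<in> hsum F (map (\<lambda>k. hmul F (sgnpow F (Suc k))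
                              (hmul F (\<phi> (take k I @ drop (Suc k) I)) (\<phi> (I ! k # J))))
                         [0..<Suc r])"

definition matroid_bases :: "'a set \<Rightarrow> 'a set set \<Rightarrow> bool" where
  "matroid_bases E \<B> \<longleftrightarrow>
     \<B> \<noteq> {} \<and> (\<forall>B\<in>\<B>. B \<subseteq> E) \<and>
     (\<forall>B1\<in>\<B>. \<forall>B2\<in>\<B>. \<forall>x\<in>B1 - B2. \<exists>y\<in>B2 - B1. insert y (B1 - {x}) \<in> \<B>)"

definition gp_support :: "('a, 'b) hyperfield_scheme \<Rightarrow> nat \<Rightarrow> nat \<Rightarrow> (nat list \<Rightarrow> 'a) \<Rightarrow> nat set set" where
  "gp_support F n r \<phi> = {set xs | xs. xs \<in> Er n r \<and> \<phi> xs \<noteq> hzero F}"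

text \<open>E^{r-1} is empty for r = 0, hence the guard 0 < r.\<close>
definition strong_GP :: "('a, 'b) hyperfield_scheme \<Rightarrow> nat \<Rightarrow> nat \<Rightarrow> (nat list \<Rightarrow> 'a) \<Rightarrow> bool" where
  "strong_GP F n r \<phi> \<longleftrightarrow>
     gp_nonzero F n r \<phi> \<and> gp_alternating F n r \<phi> \<and>
     (\<forall>I\<in>Er n (Suc r). \<forall>J\<in>Er n (r - 1). 0 < r \<longrightarrow> gp_rel F r \<phi> I J)"

definition weak_GP :: "('a, 'b) hyperfield_scheme \<Rightarrow> nat \<Rightarrow> nat \<Rightarrow> (nat list \<Rightarrow> 'a) \<Rightarrow> bool" where
  "weak_GP F n r \<phi> \<longleftrightarrow>
     gp_nonzero F n r \<phi> \<and> gp_alternating F n r \<phi> \<and>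
     matroid_bases {1..n} (gp_support F n r \<phi>) \<and>
     (\<forall>I\<in>Er n (Suc r). \<forall>J\<in>Er n (r - 1).
        0 < r \<longrightarrow> card (set I - set J) = 3 \<longrightarrow> gp_rel F r \<phi> I J)"

datatype gp_kind = Strong | Weak

definition GP :: "('a, 'b) hyperfield_scheme \<Rightarrow> gp_kind \<Rightarrow> nat \<Rightarrow> nat \<Rightarrow> (nat list \<Rightarrow> 'a) \<Rightarrow> bool" where
  "GP F k n r \<phi> = (case k of Strong \<Rightarrow> strong_GP F n r \<phi> | Weak \<Rightarrow> weak_GP F n r \<phi>)"

definition quotient_topology :: "'a topology \<Rightarrow> ('a \<Rightarrow> 'b) \<Rightarrow> 'b topology" where
  "quotient_topology X q =
     topology (\<lambda>U. U \<subseteq> q ` topspace X \<and> openin X {x \<in> topspace X. q x \<in> U})"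

lemma istopology_quotient:
  "istopology (\<lambda>U. U \<subseteq> q ` topspace X \<and> openin X {x \<in> topspace X. q x \<in> U})"
proof -
  have i: "{x \<in> topspace X. q x \<in> S \<inter> T} =
        {x \<in> topspace X. q x \<in> S} \<inter> {x \<in> topspace X. q x \<in> T}" for S T by blast
  have u: "{x \<in> topspace X. q x \<in> \<Union>K} = (\<Union>U\<in>K. {x \<in> topspace X. q x \<in> U})" for K by blast
  show ?thesis
    unfolding istopology_def i u by (auto intro!: openin_Union)
qed

lemma openin_quotient_topology:
  "openin (quotient_topology X q) U \<longleftrightarrow>
     U \<subseteq> q ` topspace X \<and> openin X {x \<in> topspace X. q x \<in> U}"
  unfolding quotient_topology_def topology_inverse'[OF istopology_quotient] by (rule refl)

definition gp_space :: "('a, 'b) hyperfield_scheme \<Rightarrow> 'a topology \<Rightarrow> nat \<Rightarrow> nat \<Rightarrow> (nat list \<Rightarrow> 'a) topology" where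
  "gp_space F T n r =
     subtopology (product_topology (\<lambda>_. T) (Er n r))
       (topspace (product_topology (\<lambda>_. T) (Er n r)) - {restrict (\<lambda>_. hzero F) (Er n r)})"

definition gp_class :: "('a, 'b) hyperfield_scheme \<Rightarrow> nat \<Rightarrow> nat \<Rightarrow> (nat list \<Rightarrow> 'a) \<Rightarrow> (nat list \<Rightarrow> 'a) set" where
  "gp_class F n r \<phi> = {restrict (\<lambda>e. hmul F \<alpha> (\<phi> e)) (Er n r) | \<alpha>. \<alpha> \<noteq> hzero F}"

definition Gr_set :: "('a, 'b) hyperfield_scheme \<Rightarrow> gp_kind \<Rightarrow> nat \<Rightarrow> nat \<Rightarrow> (nat list \<Rightarrow> 'a) set set" where
  "Gr_set F k n r = gp_class F n r ` {\<phi> \<in> Er n r \<rightarrow>\<^sub>E UNIV. GP F k n r \<phi>}"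

definition Gr_top :: "('a, 'b) hyperfield_scheme \<Rightarrow> 'a topology \<Rightarrow> gp_kind \<Rightarrow> nat \<Rightarrow> nat \<Rightarrow> (nat list \<Rightarrow> 'a) set topology" where
  "Gr_top F T k n r =
     subtopology (quotient_topology (gp_space F T n r) (gp_class F n r)) (Gr_set F k n r)"

text \<open>Real^*_F(M): preimage of M under Gr^*(f) : [\<phi>] \<mapsto> [f \<circ> \<phi>].\<close>
definition Real_set ::
  "('a, 'c) hyperfield_scheme \<Rightarrow> ('b, 'd) hyperfield_scheme \<Rightarrow> ('a \<Rightarrow> 'b) \<Rightarrow> gp_kind \<Rightarrow> nat \<Rightarrow> nat
   \<Rightarrow> (nat list \<Rightarrow> 'b) set \<Rightarrow> (nat list \<Rightarrow> 'a) set set" where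
  "Real_set F F' f k n r M =
     gp_class F n r ` {\<phi> \<in> Er n r \<rightarrow>\<^sub>E UNIV. GP F k n r \<phi> \<and>
                       gp_class F' n r (restrict (f \<circ> \<phi>) (Er n r)) = M}"

definition Real_top ::
  "('a, 'c) hyperfield_scheme \<Rightarrow> 'a topology \<Rightarrow> ('b, 'd) hyperfield_scheme \<Rightarrow> ('a \<Rightarrow> 'b) \<Rightarrow> gp_kind
   \<Rightarrow> nat \<Rightarrow> nat \<Rightarrow> (nat list \<Rightarrow> 'b) set \<Rightarrow> (nat list \<Rightarrow> 'a) set topology" where
  "Real_top F T F' f k n r M = subtopology (Gr_top F T k n r) (Real_set F F' f k n r M)"

end

theory Submission
  imports Defs
begin

context fixes F :: "('a,'c) hyperfield_scheme" assumes HF: "is_hyperfield F"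
begin
lemma hf_comm: "hmul F x y = hmul F y x" using HF[unfolded is_hyperfield_def, THEN conjunct1] by blast
lemma hf_assoc: "hmul F (hmul F x y) z = hmul F x (hmul F y z)" using HF[unfolded is_hyperfield_def, THEN conjunct2, THEN conjunct1] by blast
lemma hf_one: "hmul F (hone F) x = x" using HF[unfolded is_hyperfield_def, THEN conjunct2, THEN conjunct2, THEN conjunct2, THEN conjunct2, THEN conjunct2, THEN conjunct2, THEN conjunct2, THEN conjunct2, THEN conjunct2, THEN conjunct1] by blast
lemma hf_one_ne: "hone F \<noteq> hzero F" using HF[unfolded is_hyperfield_def, THEN conjunct2, THEN conjunct2, THEN conjunct2, THEN conjunct2, THEN conjunct2, THEN conjunct2, THEN conjunct2, THEN conjunct2, THEN conjunct1] by blast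
lemma hf_zero: "hmul F (hzero F) x = hzero F" using HF[unfolded is_hyperfield_def, THEN conjunct2, THEN conjunct2, THEN conjunct2, THEN conjunct2, THEN conjunct2, THEN conjunct2, THEN conjunct2, THEN conjunct2, THEN conjunct2, THEN conjunct2, THEN conjunct2, THEN conjunct2, THEN conjunct1] by blast
lemma hf_nozd: "x \<noteq> hzero F \<Longrightarrow> y \<noteq> hzero F \<Longrightarrow> hmul F x y \<noteq> hzero F" using HF[unfolded is_hyperfield_def, THEN conjunct2, THEN conjunct2, THEN conjunct2, THEN conjunct2, THEN conjunct2, THEN conjunct2, THEN conjunct2, THEN conjunct2, THEN conjunct2, THEN conjunct2, THEN conjunct1] by blast
lemma hf_inv_unique: assumes "hmul F x y = hone F" shows "hinv F x = y"
proof -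
  have u: "z = y" if "hmul F x z = hone F" for z
  proof -
    have "z = hmul F (hmul F y x) z" using assms hf_one hf_comm by metis
    also have "\<dots> = y" using that hf_assoc hf_comm hf_one assms by metis
    finally show ?thesis .
  qed
  show ?thesis unfolding hinv_def using assms u by (rule the_equality)
qed
lemma hf_inv: assumes "x \<noteq> hzero F" shows "hmul F x (hinv F x) = hone F"
proof -
  obtain y where "hmul F x y = hone F" using HF[unfolded is_hyperfield_def, THEN conjunct2, THEN conjunct2, THEN conjunct2, THEN conjunct2, THEN conjunct2, THEN conjunct2, THEN conjunct2, THEN conjunct2, THEN conjunct2, THEN conjunct2, THEN conjunct2, THEN conjunct1] assms by blast
  thus ?thesis using hf_inv_unique by simp
qed
lemma hf_inv_nz: assumes "x \<noteq> hzero F" shows "hinv F x \<noteq> hzero F"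
  using hf_inv[OF assms] hf_zero hf_comm hf_one_ne by metis
lemma hf_inv_mul: assumes "x \<noteq> hzero F" "y \<noteq> hzero F"
  shows "hinv F (hmul F x y) = hmul F (hinv F x) (hinv F y)"
proof (rule hf_inv_unique)
  have "hmul F (hmul F x y) (hmul F (hinv F x) (hinv F y))
      = hmul F (hmul F x (hinv F x)) (hmul F y (hinv F y))" using hf_assoc hf_comm by metis
  thus "hmul F (hmul F x y) (hmul F (hinv F x) (hinv F y)) = hone F"
    using hf_inv assms hf_one by simp
qed
end

lemma hom_nz: assumes "is_hyperfield F" "is_hyperfield F'" "hf_morphism F F' f" "x \<noteq> hzero F"
  shows "f x \<noteq> hzero F'"
proof
  assume "f x = hzero F'"
  have "f (hmul F x (hinv F x)) = hone F'" using hf_inv[OF assms(1,4)] assms(3) unfolding hf_morphism_def by simp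
  moreover have "f (hmul F x (hinv F x)) = hzero F'" using assms(3) \<open>f x = _\<close> hf_zero[OF assms(2)]
    unfolding hf_morphism_def by simp
  ultimately show False using hf_one_ne[OF assms(2)] by simp
qed


lemma mem_gp_class: "x \<in> gp_class F n r \<phi> \<longleftrightarrow> (\<exists>\<alpha>. \<alpha> \<noteq> hzero F \<and> x = restrict (\<lambda>e. hmul F \<alpha> (\<phi> e)) (Er n r))"
  unfolding gp_class_def by blast

lemma class_self: assumes "is_hyperfield F" "\<phi> \<in> Er n r \<rightarrow>\<^sub>E UNIV"
  shows "\<phi> \<in> gp_class F n r \<phi>"
  unfolding mem_gp_class
proof (intro exI conjI)
  show "hone F \<noteq> hzero F" using hf_one_ne[OF assms(1)] .
  show "\<phi> = restrict (\<lambda>e. hmul F (hone F) (\<phi> e)) (Er n r)"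
    using assms(2) by (simp add: hf_one[OF assms(1)] extensional_restrict PiE_iff)
qed

lemma class_scale: assumes HF: "is_hyperfield F" and "\<alpha> \<noteq> hzero F"
  shows "gp_class F n r (restrict (\<lambda>e. hmul F \<alpha> (\<phi> e)) (Er n r)) = gp_class F n r \<phi>"
proof
  show "gp_class F n r (restrict (\<lambda>e. hmul F \<alpha> (\<phi> e)) (Er n r)) \<subseteq> gp_class F n r \<phi>"
  proof
    fix x assume "x \<in> gp_class F n r (restrict (\<lambda>e. hmul F \<alpha> (\<phi> e)) (Er n r))"
    then obtain \<gamma> where g: "\<gamma> \<noteq> hzero F" and x: "x = restrict (\<lambda>e. hmul F \<gamma> (restrict (\<lambda>e. hmul F \<alpha> (\<phi> e)) (Er n r) e)) (Er n r)"
      unfolding mem_gp_class by blast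
    have "x = restrict (\<lambda>e. hmul F (hmul F \<gamma> \<alpha>) (\<phi> e)) (Er n r)"
      unfolding x by (rule restrict_ext) (simp add: hf_assoc[OF HF])
    thus "x \<in> gp_class F n r \<phi>" unfolding mem_gp_class using hf_nozd[OF HF g assms(2)] by blast
  qed
next
  show "gp_class F n r \<phi> \<subseteq> gp_class F n r (restrict (\<lambda>e. hmul F \<alpha> (\<phi> e)) (Er n r))"
  proof
    fix x assume "x \<in> gp_class F n r \<phi>"
    then obtain \<gamma> where g: "\<gamma> \<noteq> hzero F" and x: "x = restrict (\<lambda>e. hmul F \<gamma> (\<phi> e)) (Er n r)"
      unfolding mem_gp_class by blast
    have ia: "hmul F (hinv F \<alpha>) \<alpha> = hone F" using hf_inv[OF HF assms(2)] hf_comm[OF HF] by metis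
    have "x = restrict (\<lambda>e. hmul F (hmul F \<gamma> (hinv F \<alpha>)) (restrict (\<lambda>e. hmul F \<alpha> (\<phi> e)) (Er n r) e)) (Er n r)"
      unfolding x by (rule restrict_ext) (simp add: hf_assoc[OF HF, symmetric] hf_assoc[OF HF, of \<gamma>] ia hf_one[OF HF])
    thus "x \<in> gp_class F n r (restrict (\<lambda>e. hmul F \<alpha> (\<phi> e)) (Er n r))"
      unfolding mem_gp_class using hf_nozd[OF HF g hf_inv_nz[OF HF assms(2)]] by blast
  qed
qed

lemma nu_scale: assumes HF: "is_hyperfield F" and "\<alpha> \<noteq> hzero F" "s \<noteq> hzero F"
  shows "hmul F (hinv F (hmul F \<alpha> s)) (hmul F \<alpha> x) = hmul F (hinv F s) x"
proof -
  have ia: "hmul F (hinv F \<alpha>) \<alpha> = hone F" using hf_inv[OF HF assms(2)] hf_comm[OF HF] by metis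
  have "hmul F (hinv F (hmul F \<alpha> s)) (hmul F \<alpha> x) = hmul F (hmul F (hinv F \<alpha>) (hinv F s)) (hmul F \<alpha> x)"
    using hf_inv_mul[OF HF assms(2,3)] by simp
  also have "\<dots> = hmul F (hinv F s) (hmul F (hmul F (hinv F \<alpha>) \<alpha>) x)"
    using hf_assoc[OF HF] hf_comm[OF HF] by metis
  finally show ?thesis using ia hf_one[OF HF] by simp
qed


lemma main_open:
  fixes F :: "'a hyperfield" and F' :: "'b hyperfield" and f :: "'a \<Rightarrow> 'b"
    and T1 T2 :: "'a topology" and k :: gp_kind and n r :: nat
    and M :: "(nat list \<Rightarrow> 'b) set"
  assumes HF: "is_hyperfield F" and HF': "is_hyperfield F'" and hom: "hf_morphism F F' f"
    and top1: "is_top_hyperfield F T1" and top2: "is_top_hyperfield F T2"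
    and fib: "\<And>a. subtopology T1 (f -` {a}) = subtopology T2 (f -` {a})"
    and MG: "M \<in> Gr_set F' k n r"
    and U: "openin (Real_top F T2 F' f k n r M) U"
  shows "openin (Real_top F T1 F' f k n r M) U"
proof -
  define E where "E = Er n r"
  define q where "q = gp_class F n r"
  define z where "z = restrict (\<lambda>_. hzero F) E"
  define P1 where "P1 = product_topology (\<lambda>_. T1) E"
  define P2 where "P2 = product_topology (\<lambda>_. T2) E"
  define X1 where "X1 = gp_space F T1 n r"
  define X2 where "X2 = gp_space F T2 n r"
  have tT1: "topspace T1 = UNIV" and tT2: "topspace T2 = UNIV"
    using top1 top2 unfolding is_top_hyperfield_def by auto
  have tP1: "topspace P1 = E \<rightarrow>\<^sub>E UNIV" and tP2: "topspace P2 = E \<rightarrow>\<^sub>E UNIV"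
    unfolding P1_def P2_def by (simp_all add: tT1 tT2)
  have X1: "X1 = subtopology P1 ((E \<rightarrow>\<^sub>E UNIV) - {z})" and X2: "X2 = subtopology P2 ((E \<rightarrow>\<^sub>E UNIV) - {z})"
    unfolding X1_def X2_def gp_space_def P1_def[symmetric] P2_def[symmetric] E_def[symmetric] z_def[symmetric]
    by (simp_all add: tP1 tP2)
  have tX1: "topspace X1 = (E \<rightarrow>\<^sub>E UNIV) - {z}" and tX2: "topspace X2 = (E \<rightarrow>\<^sub>E UNIV) - {z}"
    unfolding X1 X2 by (simp_all add: tP1 tP2 Int_absorb1)
  have f0: "f (hzero F) = hzero F'" and f1: "f (hone F) = hone F'"
    and fmul: "\<And>x y. f (hmul F x y) = hmul F' (f x) (f y)"
    using hom unfolding hf_morphism_def by auto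
  obtain \<psi> where \<psi>E: "\<psi> \<in> E \<rightarrow>\<^sub>E UNIV" and \<psi>GP: "GP F' k n r \<psi>" and M: "M = gp_class F' n r \<psi>"
    using MG unfolding Gr_set_def E_def by blast
  have "gp_nonzero F' n r \<psi>" using \<psi>GP unfolding GP_def strong_GP_def weak_GP_def by (cases k) auto
  then obtain e0 where e0: "e0 \<in> E" and \<psi>e0: "\<psi> e0 \<noteq> hzero F'" unfolding gp_nonzero_def E_def by blast
  define \<psi>t where "\<psi>t = restrict (\<lambda>e. hmul F' (hinv F' (\<psi> e0)) (\<psi> e)) E"
  define Yt where "Yt = (\<Pi>\<^sub>E e\<in>E. f -` {\<psi>t e})"
  define \<nu> where "\<nu> = (\<lambda>\<phi>::nat list \<Rightarrow> 'a. restrict (\<lambda>e. hmul F (hinv F (\<phi> e0)) (\<phi> e)) E)"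
  have PY: "subtopology P1 Yt = subtopology P2 Yt"
    unfolding P1_def P2_def Yt_def subtopology_product_topology using fib by simp
  have \<psi>t0: "\<psi>t e0 = hone F'" unfolding \<psi>t_def using e0 hf_inv[OF HF' \<psi>e0] hf_comm[OF HF'] by simp
  have zY: "z \<notin> Yt"
  proof
    assume "z \<in> Yt"
    hence "f (z e0) = \<psi>t e0" using e0 unfolding Yt_def by auto
    thus False using \<psi>t0 e0 f0 hf_one_ne[OF HF'] unfolding z_def by simp
  qed
  have rep: "\<phi> e0 \<noteq> hzero F \<and> \<phi> \<in> (E \<rightarrow>\<^sub>E UNIV) - {z} \<and> \<nu> \<phi> \<in> Yt \<and> \<nu> \<phi> \<in> (E \<rightarrow>\<^sub>E UNIV) - {z} \<and> q (\<nu> \<phi>) = q \<phi>"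
    if \<phi>E: "\<phi> \<in> E \<rightarrow>\<^sub>E UNIV" and \<phi>M: "gp_class F' n r (restrict (f \<circ> \<phi>) E) = M" for \<phi>
  proof -
    have "restrict (f \<circ> \<phi>) E \<in> M"
      using class_self[OF HF', of "restrict (f \<circ> \<phi>) E" n r] \<phi>M by (simp add: E_def)
    then obtain \<beta> where \<beta>: "\<beta> \<noteq> hzero F'" and f\<phi>: "restrict (f \<circ> \<phi>) E = restrict (\<lambda>e. hmul F' \<beta> (\<psi> e)) E"
      unfolding M mem_gp_class E_def by blast
    have f\<phi>e: "f (\<phi> e) = hmul F' \<beta> (\<psi> e)" if "e \<in> E" for e
      using fun_cong[OF f\<phi>, of e] that by simp
    have nz: "\<phi> e0 \<noteq> hzero F"
    proof
      assume "\<phi> e0 = hzero F"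
      hence "hmul F' \<beta> (\<psi> e0) = hzero F'" using f\<phi>e[OF e0] f0 by simp
      thus False using hf_nozd[OF HF' \<beta> \<psi>e0] by simp
    qed
    have \<phi>z: "\<phi> \<noteq> z" using nz unfolding z_def using e0 by auto
    define \<gamma> where "\<gamma> = hinv F (\<phi> e0)"
    have \<gamma>: "\<gamma> \<noteq> hzero F" unfolding \<gamma>_def using hf_inv_nz[OF HF nz] .
    have \<nu>\<phi>: "\<nu> \<phi> = restrict (\<lambda>e. hmul F \<gamma> (\<phi> e)) E" unfolding \<nu>_def \<gamma>_def ..
    define \<delta> where "\<delta> = hmul F' (f \<gamma>) \<beta>"
    have "hmul F' (\<psi> e0) \<delta> = f (hmul F \<gamma> (\<phi> e0))"
      unfolding \<delta>_def fmul f\<phi>e[OF e0] using hf_assoc[OF HF'] hf_comm[OF HF'] by metis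
    also have "\<dots> = hone F'" unfolding \<gamma>_def using hf_inv[OF HF nz] hf_comm[OF HF] f1 by metis
    finally have "hinv F' (\<psi> e0) = \<delta>" by (rule hf_inv_unique[OF HF'])
    hence Y: "\<nu> \<phi> \<in> Yt" unfolding Yt_def \<nu>\<phi> \<psi>t_def
      by (auto simp: PiE_iff fmul f\<phi>e \<delta>_def hf_assoc[OF HF'])
    have "\<nu> \<phi> e0 = hone F" unfolding \<nu>\<phi> \<gamma>_def using e0 hf_inv[OF HF nz] hf_comm[OF HF] by simp
    hence "\<nu> \<phi> \<noteq> z" unfolding z_def using e0 hf_one_ne[OF HF] by auto
    moreover have "q (\<nu> \<phi>) = q \<phi>" unfolding q_def \<nu>\<phi> E_def by (rule class_scale[OF HF \<gamma>])
    ultimately show ?thesis using nz \<phi>z \<phi>E Y unfolding \<nu>_def by auto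
  qed
  obtain V where V: "openin (quotient_topology X2 q) V" and UV: "U = V \<inter> (Gr_set F k n r \<inter> Real_set F F' f k n r M)"
    using U unfolding Real_top_def Gr_top_def subtopology_subtopology openin_subtopology X2_def q_def by blast
  define W where "W = {x \<in> topspace X2. q x \<in> V}"
  have W: "openin X2 W" using V unfolding W_def openin_quotient_topology by blast
  then obtain O2 where O2: "openin P2 O2" and WO2: "W = O2 \<inter> ((E \<rightarrow>\<^sub>E UNIV) - {z})"
    unfolding X2 openin_subtopology by blast
  have YtE: "Yt \<subseteq> E \<rightarrow>\<^sub>E UNIV" unfolding Yt_def by auto
  have "openin (subtopology P2 Yt) (W \<inter> Yt)"
    unfolding openin_subtopology using O2 WO2 zY YtE by blast
  then obtain O1 where O1: "openin P1 O1" and WO1: "W \<inter> Yt = O1 \<inter> Yt"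
    unfolding PY[symmetric] openin_subtopology by blast
  define N where "N = {\<phi> \<in> topspace X1. \<phi> e0 \<noteq> hzero F}"
  have ev: "continuous_map X1 T1 (\<lambda>\<phi>. \<phi> e0)"
    unfolding X1 P1_def by (rule continuous_map_from_subtopology, rule continuous_map_product_projection[OF e0])
  have N: "openin X1 N"
    unfolding N_def using openin_continuous_map_preimage[OF ev, of "- {hzero F}"] top1
    unfolding is_top_hyperfield_def by simp
  have cinv: "continuous_map (subtopology X1 N) T1 (\<lambda>\<phi>. hinv F (\<phi> e0))"
  proof -
    have "continuous_map (subtopology X1 N) (subtopology T1 (- {hzero F})) (\<lambda>\<phi>. \<phi> e0)"
      using continuous_map_from_subtopology[OF ev, of N] unfolding continuous_map_in_subtopology N_def
      by auto
    moreover have "continuous_map (subtopology T1 (- {hzero F})) (subtopology T1 (- {hzero F})) (hinv F)"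
      using top1 unfolding is_top_hyperfield_def by blast
    ultimately have "continuous_map (subtopology X1 N) (subtopology T1 (- {hzero F})) (hinv F \<circ> (\<lambda>\<phi>. \<phi> e0))"
      by (rule continuous_map_compose)
    thus ?thesis using continuous_map_into_fulltopology by (auto simp: o_def)
  qed
  have cmul: "continuous_map (prod_topology T1 T1) T1 (\<lambda>(x, y). hmul F x y)"
    using top1 unfolding is_top_hyperfield_def by blast
  have c\<nu>: "continuous_map (subtopology X1 N) P1 \<nu>"
    unfolding P1_def continuous_map_componentwise
  proof (intro conjI ballI)
    show "\<nu> ` topspace (subtopology X1 N) \<subseteq> extensional E" unfolding \<nu>_def by auto
    fix e assume e: "e \<in> E"
    have ce: "continuous_map (subtopology X1 N) T1 (\<lambda>\<phi>. \<phi> e)"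
      unfolding X1 P1_def by (intro continuous_map_from_subtopology continuous_map_product_projection[OF e])
    have "continuous_map (subtopology X1 N) T1 ((\<lambda>(x, y). hmul F x y) \<circ> (\<lambda>\<phi>. (hinv F (\<phi> e0), \<phi> e)))"
      by (rule continuous_map_compose[OF continuous_map_pairedI[OF cinv ce] cmul])
    thus "continuous_map (subtopology X1 N) T1 (\<lambda>x. \<nu> x e)" unfolding \<nu>_def using e by (simp add: o_def)
  qed
  define S where "S = {\<phi> \<in> topspace (subtopology X1 N). \<nu> \<phi> \<in> O1}"
  have S: "openin X1 S"
    unfolding S_def by (rule openin_trans_full[OF openin_continuous_map_preimage[OF c\<nu> O1] N])
  have SN: "S \<subseteq> N" unfolding S_def by auto
  have NX: "N \<subseteq> (E \<rightarrow>\<^sub>E UNIV) - {z}" unfolding N_def tX1 by auto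
  have sat: "x \<in> S" if x: "x \<in> topspace X1" and s: "s \<in> S" and qx: "q x = q s" for x s
  proof -
    have xE: "x \<in> Er n r \<rightarrow>\<^sub>E UNIV" using x tX1 E_def by simp
    have "x \<in> q x" unfolding q_def by (rule class_self[OF HF xE])
    hence "x \<in> q s" using qx by simp
    hence "\<exists>\<alpha>. \<alpha> \<noteq> hzero F \<and> x = restrict (\<lambda>e. hmul F \<alpha> (s e)) E" unfolding q_def mem_gp_class E_def .
    then obtain \<alpha> where \<alpha>: "\<alpha> \<noteq> hzero F" and xs: "x = restrict (\<lambda>e. hmul F \<alpha> (s e)) E"
      by blast
    have s0: "s e0 \<noteq> hzero F" using s SN unfolding N_def by auto
    have x0: "x e0 \<noteq> hzero F" using e0 xs hf_nozd[OF HF \<alpha> s0] by simp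
    have "\<nu> x = \<nu> s" unfolding \<nu>_def xs using e0 by (intro restrict_ext) (simp add: nu_scale[OF HF \<alpha> s0])
    thus ?thesis using s x x0 unfolding S_def N_def by auto
  qed
  define V' where "V' = q ` S"
  have V': "openin (quotient_topology X1 q) V'"
    unfolding openin_quotient_topology
  proof
    show "V' \<subseteq> q ` topspace X1" unfolding V'_def using openin_subset[OF S] by blast
    have "{x \<in> topspace X1. q x \<in> V'} = S"
      using sat openin_subset[OF S] unfolding V'_def by blast
    thus "openin X1 {x \<in> topspace X1. q x \<in> V'}" using S by simp
  qed
  have key: "c \<in> V \<longleftrightarrow> c \<in> V'" if c: "c \<in> Real_set F F' f k n r M" for c
  proof -
    obtain \<phi> where \<phi>E: "\<phi> \<in> E \<rightarrow>\<^sub>E UNIV" and \<phi>M: "gp_class F' n r (restrict (f \<circ> \<phi>) E) = M"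
      and c\<phi>: "c = q \<phi>"
      using c unfolding Real_set_def q_def E_def by blast
    note R = rep[OF \<phi>E \<phi>M]
    show ?thesis
    proof
      assume "c \<in> V"
      hence "\<nu> \<phi> \<in> W" unfolding W_def tX2 using R c\<phi> by auto
      hence "\<nu> \<phi> \<in> O1" using WO1 R by blast
      hence "\<phi> \<in> S" unfolding S_def N_def using R tX1 N_def by auto
      thus "c \<in> V'" unfolding V'_def c\<phi> by blast
    next
      assume "c \<in> V'"
      then obtain s where s: "s \<in> S" and cs: "c = q s" unfolding V'_def by blast
      have "\<phi> \<in> S" using sat[OF _ s] R c\<phi> cs tX1 by auto
      hence "\<nu> \<phi> \<in> O1" unfolding S_def by auto
      hence "\<nu> \<phi> \<in> W" using WO1 R by blast
      thus "c \<in> V" unfolding W_def using R c\<phi> by auto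
    qed
  qed
  have "U = V' \<inter> (Gr_set F k n r \<inter> Real_set F F' f k n r M)" unfolding UV using key by blast
  thus ?thesis unfolding Real_top_def Gr_top_def subtopology_subtopology openin_subtopology
    using V' unfolding X1_def q_def by blast
qed


theorem lemma5p1:
  fixes F :: "'a hyperfield" and F' :: "'b hyperfield" and f :: "'a \<Rightarrow> 'b"
    and T1 T2 :: "'a topology" and k :: gp_kind and n r :: nat
    and M :: "(nat list \<Rightarrow> 'b) set"
  assumes "is_hyperfield F" and "is_hyperfield F'" and "hf_morphism F F' f"
    and "is_top_hyperfield F T1" and "is_top_hyperfield F T2"
    and "\<forall>a. homeomorphic_map (subtopology T1 (f -` {a})) (subtopology T2 (f -` {a})) id"
    and "M \<in> Gr_set F' k n r"
  shows "homeomorphic_map (Real_top F T1 F' f k n r M) (Real_top F T2 F' f k n r M) id"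
proof -
  have fib: "subtopology T1 (f -` {a}) = subtopology T2 (f -` {a})" for a
    using assms(6) homeomorphic_map_id by metis
  have "Real_top F T2 F' f k n r M = Real_top F T1 F' f k n r M"
  proof (rule topology_eq[THEN iffD2], intro allI iffI)
    fix U
    assume "openin (Real_top F T2 F' f k n r M) U"
    thus "openin (Real_top F T1 F' f k n r M) U"
      by (rule main_open[OF assms(1-5) fib assms(7)])
  next
    fix U
    assume "openin (Real_top F T1 F' f k n r M) U"
    thus "openin (Real_top F T2 F' f k n r M) U"
      by (rule main_open[OF assms(1-3,5,4) fib[symmetric] assms(7)])
  qed
  thus ?thesis by simp
qed

end
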